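(* Let $f\in C([0,1],\mathbb R)\cap C^2([0,1),\mathbb R)$, $R\in C([0,1],\mathbb R)\cap C^1([0,1),\mathbb R)$ and $\epsilon>0$, and assume that for all $w\in[0,1)$ $$f'(w)=(1-w)^{\epsilon-1}R(w),\qquad R'(w)>0.$$ Then $$\lim_{w\to1^-}\frac{f(1)-f(w)}{(1-w)^\epsilon}=\frac{R(1)}{\epsilon},\qquad \frac{d}{dw}\,\frac{f(1)-f(w)}{(1-w)^\epsilon}>0\quad\text{for all }w\in[0,1),$$ and consequently $$f(1)-f(0)<\frac{f(1)-f(w)}{(1-w)^\epsilon}<\frac{R(1)}{\epsilon}\qquad\text{for all }w\in(0,1).$$ *)

theory Defs
  imports "HOL-Analysis.Analysis"
begin

definition C1_on :: "real set \<Rightarrow> (real \<Rightarrow> real) \<Rightarrow> bool" where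
  "C1_on S g \<longleftrightarrow> (\<exists>g'. (\<forall>x\<in>S. (g has_real_derivative g' x) (at x within S)) \<and> continuous_on S g')"

definition C2_on :: "real set \<Rightarrow> (real \<Rightarrow> real) \<Rightarrow> bool" where
  "C2_on S g \<longleftrightarrow> (\<exists>g'. (\<forall>x\<in>S. (g has_real_derivative g' x) (at x within S)) \<and> C1_on S g')"

end

theory Submission
  imports Defs
begin

theorem lemma5p1:
  fixes f R R' :: "real \<Rightarrow> real" and \<epsilon> :: real
  assumes f_cont: "continuous_on {0..1} f"
    and f_C2: "C2_on {0..<1} f"
    and R_cont: "continuous_on {0..1} R"
    and R_C1: "C1_on {0..<1} R"
    and eps_pos: "\<epsilon> > 0"
    and f_deriv: "\<And>w. w \<in> {0..<1} \<Longrightarrow>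
        (f has_real_derivative ((1 - w) powr (\<epsilon> - 1) * R w)) (at w within {0..<1})"
    and R_deriv: "\<And>w. w \<in> {0..<1} \<Longrightarrow> (R has_real_derivative R' w) (at w within {0..<1})"
    and R'_pos: "\<And>w. w \<in> {0..<1} \<Longrightarrow> R' w > 0"
  shows "((\<lambda>w. (f 1 - f w) / (1 - w) powr \<epsilon>) \<longlongrightarrow> R 1 / \<epsilon>) (at_left 1)
    \<and> (\<forall>w\<in>{0..<1}. \<exists>D. ((\<lambda>v. (f 1 - f v) / (1 - v) powr \<epsilon>)
             has_real_derivative D) (at w within {0..<1}) \<and> D > 0)
    \<and> (\<forall>w\<in>{0<..<1}.
           f 1 - f 0 < (f 1 - f w) / (1 - w) powr \<epsilon> \<and> (f 1 - f w) / (1 - w) powr \<epsilon> < R 1 / \<epsilon>)"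
proof -
  have fD: "(f has_real_derivative ((1 - v) powr (\<epsilon> - 1) * R v)) (at v)" if "0 < v" "v < 1" for v
    using f_deriv[of v] that at_within_interior[of v "{0..<1}"] by auto
  have RD: "(R has_real_derivative R' v) (at v)" if "0 < v" "v < 1" for v
    using R_deriv[of v] that at_within_interior[of v "{0..<1}"] by auto
  have Rmono: "R x < R y" if "0 \<le> x" "x < y" "y < 1" for x y
  proof (rule DERIV_pos_imp_increasing_open[OF \<open>x < y\<close>])
    fix z assume z: "x < z" "z < y"
    then have "0 < z" "z < 1" using that by auto
    then show "\<exists>d. (R has_real_derivative d) (at z) \<and> 0 < d"
      using RD[of z] R'_pos[of z] by (intro exI[of _ "R' z"]) auto
  next
    show "continuous_on {x..y} R"
      by (rule continuous_on_subset[OF R_cont]) (use that in auto)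
  qed
  have Rlim: "(R \<longlongrightarrow> R 1) (at_left 1)"
  proof -
    have "(R \<longlongrightarrow> R 1) (at 1 within {0..1})"
      using R_cont by (simp add: continuous_on_def)
    moreover have "at (1::real) within {0..1} = at_left 1"
      by (rule at_within_Icc_at_left) simp
    ultimately show ?thesis by simp
  qed
  have R1: "R x < R 1" if "0 \<le> x" "x < 1" for x
  proof -
    define m where "m = (x + 1) / 2"
    have "x < m" "m < 1" using that by (auto simp: m_def)
    have "R m \<le> R 1"
    proof (rule tendsto_lowerbound[OF Rlim])
      show "\<forall>\<^sub>F t in at_left 1. R m \<le> R t"
        using eventually_at_left_real[OF \<open>m < 1\<close>]
        by eventually_elim (use Rmono \<open>x < m\<close> that in \<open>auto intro: less_imp_le\<close>)
    qed simp
    with Rmono[OF that(1) \<open>x < m\<close> \<open>m < 1\<close>] show ?thesis by simp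
  qed
  have pcont: "continuous_on {w..1} (\<lambda>v. (1 - v) powr \<epsilon>)" for w
    by (intro continuous_on_powr' continuous_intros) (use eps_pos in auto)
  have pD: "((\<lambda>v. (1 - v) powr \<epsilon>) has_real_derivative (- (\<epsilon> * (1 - v) powr (\<epsilon> - 1)))) (at v within S)"
    if "v < 1" for v S
    using that by (auto intro!: derivative_eq_intros)
  have fcw: "continuous_on {w..1} f" if "0 \<le> w" for w
    by (rule continuous_on_subset[OF f_cont]) (use that in auto)
  have lower: "(1 - w) powr \<epsilon> * R w < \<epsilon> * (f 1 - f w)" if "0 \<le> w" "w < 1" for w
  proof -
    let ?h = "\<lambda>v. \<epsilon> * (f v - f w) - ((1 - w) powr \<epsilon> - (1 - v) powr \<epsilon>) * R w"
    have "?h w < ?h 1"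
    proof (rule DERIV_pos_imp_increasing_open[OF \<open>w < 1\<close>])
      fix v assume v: "w < v" "v < 1"
      have "(?h has_real_derivative (\<epsilon> * ((1 - v) powr (\<epsilon> - 1) * R v) - (- (- (\<epsilon> * (1 - v) powr (\<epsilon> - 1)))) * R w)) (at v)"
        using v that fD[of v] by (intro derivative_eq_intros pD) auto
      moreover have "\<epsilon> * ((1 - v) powr (\<epsilon> - 1) * R v) - (- (- (\<epsilon> * (1 - v) powr (\<epsilon> - 1)))) * R w
          = \<epsilon> * (1 - v) powr (\<epsilon> - 1) * (R v - R w)" by (simp add: algebra_simps)
      moreover have "\<epsilon> * (1 - v) powr (\<epsilon> - 1) * (R v - R w) > 0"
        using Rmono[of w v] v that eps_pos by auto
      ultimately show "\<exists>y. (?h has_real_derivative y) (at v) \<and> 0 < y" by auto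
    next
      show "continuous_on {w..1} ?h"
        by (intro continuous_intros fcw pcont) (use that in auto)
    qed
    then show ?thesis by simp
  qed
  have upper: "\<epsilon> * (f 1 - f w) < (1 - w) powr \<epsilon> * R 1" if "0 \<le> w" "w < 1" for w
  proof -
    let ?h = "\<lambda>v. ((1 - w) powr \<epsilon> - (1 - v) powr \<epsilon>) * R 1 - \<epsilon> * (f v - f w)"
    have "?h w < ?h 1"
    proof (rule DERIV_pos_imp_increasing_open[OF \<open>w < 1\<close>])
      fix v assume v: "w < v" "v < 1"
      have "(?h has_real_derivative ((- (- (\<epsilon> * (1 - v) powr (\<epsilon> - 1)))) * R 1 - \<epsilon> * ((1 - v) powr (\<epsilon> - 1) * R v))) (at v)"
        using v that fD[of v] by (intro derivative_eq_intros pD) auto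
      moreover have "(- (- (\<epsilon> * (1 - v) powr (\<epsilon> - 1)))) * R 1 - \<epsilon> * ((1 - v) powr (\<epsilon> - 1) * R v)
          = \<epsilon> * (1 - v) powr (\<epsilon> - 1) * (R 1 - R v)" by (simp add: algebra_simps)
      moreover have "\<epsilon> * (1 - v) powr (\<epsilon> - 1) * (R 1 - R v) > 0"
        using R1[of v] v that eps_pos by auto
      ultimately show "\<exists>y. (?h has_real_derivative y) (at v) \<and> 0 < y" by auto
    next
      show "continuous_on {w..1} ?h"
        by (intro continuous_intros fcw pcont) (use that in auto)
    qed
    then show ?thesis by simp
  qed
  define g where "g = (\<lambda>v. (f 1 - f v) / (1 - v) powr \<epsilon>)"
  have gD: "\<exists>D. (g has_real_derivative D) (at w within {0..<1}) \<and> D > 0" if "0 \<le> w" "w < 1" for w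
  proof -
    let ?P = "(1 - w) powr \<epsilon>"
    let ?Q = "(1 - w) powr (\<epsilon> - 1)"
    have Ppos: "?P > 0" and Qpos: "?Q > 0" using that by auto
    have "(g has_real_derivative ((- (?Q * R w)) * ?P - (f 1 - f w) * (- (\<epsilon> * ?Q))) / (?P * ?P))
        (at w within {0..<1})"
      unfolding g_def using that f_deriv[of w]
      by (intro derivative_eq_intros pD) auto
    moreover have "(- (?Q * R w)) * ?P - (f 1 - f w) * (- (\<epsilon> * ?Q)) = ?Q * (\<epsilon> * (f 1 - f w) - ?P * R w)"
      by (simp add: algebra_simps)
    moreover have "?Q * (\<epsilon> * (f 1 - f w) - ?P * R w) / (?P * ?P) > 0"
      using Ppos Qpos lower[OF that] by auto
    ultimately show ?thesis by auto
  qed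
  have gbounds: "R w / \<epsilon> < g w \<and> g w < R 1 / \<epsilon>" if "0 \<le> w" "w < 1" for w
  proof -
    have Ppos: "(1 - w) powr \<epsilon> > 0" using that by auto
    let ?P = "(1 - w) powr \<epsilon>"
    have e1: "(f 1 - f w) / ?P - R w / \<epsilon> = (\<epsilon> * (f 1 - f w) - ?P * R w) / (\<epsilon> * ?P)"
      using Ppos eps_pos by (simp add: field_simps)
    have e2: "R 1 / \<epsilon> - (f 1 - f w) / ?P = (?P * R 1 - \<epsilon> * (f 1 - f w)) / (\<epsilon> * ?P)"
      using Ppos eps_pos by (simp add: field_simps)
    have "(\<epsilon> * (f 1 - f w) - ?P * R w) / (\<epsilon> * ?P) > 0"
      using lower[OF that] Ppos eps_pos by simp
    moreover have "(?P * R 1 - \<epsilon> * (f 1 - f w)) / (\<epsilon> * ?P) > 0"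
      using upper[OF that] Ppos eps_pos by simp
    ultimately show ?thesis using e1 e2 unfolding g_def by linarith
  qed
  have part3: "f 1 - f 0 < g w \<and> g w < R 1 / \<epsilon>" if "0 < w" "w < 1" for w
  proof -
    have "g 0 < g w"
    proof (rule DERIV_pos_imp_increasing_open[OF \<open>0 < w\<close>])
      fix v assume v: "0 < v" "v < w"
      then show "\<exists>y. (g has_real_derivative y) (at v) \<and> 0 < y"
        using gD[of v] that at_within_interior[of v "{0..<1}"] by auto
    next
      show "continuous_on {0..w} g"
      proof (rule continuous_on_subset[of "{0..<1}"])
        show "continuous_on {0..<1} g"
        proof (unfold continuous_on_eq_continuous_within, intro ballI)
          fix x :: real assume "x \<in> {0..<1}"
          then obtain D where "(g has_real_derivative D) (at x within {0..<1})" using gD by auto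
          then show "continuous (at x within {0..<1}) g" by (rule DERIV_continuous)
        qed
      qed (use that in auto)
    qed
    moreover have "g 0 = f 1 - f 0" by (simp add: g_def)
    ultimately show ?thesis using gbounds[of w] that by auto
  qed
  have lim: "(g \<longlongrightarrow> R 1 / \<epsilon>) (at_left 1)"
  proof (rule tendsto_sandwich[of "\<lambda>w. R w / \<epsilon>" _ _ "\<lambda>_. R 1 / \<epsilon>"])
    show "\<forall>\<^sub>F n in at_left 1. R n / \<epsilon> \<le> g n"
      using eventually_at_left_real[OF zero_less_one]
      by eventually_elim (use gbounds in \<open>auto intro: less_imp_le\<close>)
    show "\<forall>\<^sub>F n in at_left 1. g n \<le> R 1 / \<epsilon>"
      using eventually_at_left_real[OF zero_less_one]
      by eventually_elim (use gbounds in \<open>auto intro: less_imp_le\<close>)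
    show "((\<lambda>w. R w / \<epsilon>) \<longlongrightarrow> R 1 / \<epsilon>) (at_left 1)"
      by (intro tendsto_intros Rlim) (use eps_pos in auto)
  qed simp
  show ?thesis
  proof (intro conjI ballI)
    show "((\<lambda>w. (f 1 - f w) / (1 - w) powr \<epsilon>) \<longlongrightarrow> R 1 / \<epsilon>) (at_left 1)"
      using lim by (simp add: g_def)
  next
    fix w :: real assume "w \<in> {0..<1}"
    then show "\<exists>D. ((\<lambda>v. (f 1 - f v) / (1 - v) powr \<epsilon>) has_real_derivative D) (at w within {0..<1}) \<and> D > 0"
      using gD[of w] unfolding g_def by simp
  next
    fix w :: real assume "w \<in> {0<..<1}"
    then show "f 1 - f 0 < (f 1 - f w) / (1 - w) powr \<epsilon>"
      using part3[of w] unfolding g_def by simp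
  next
    fix w :: real assume "w \<in> {0<..<1}"
    then show "(f 1 - f w) / (1 - w) powr \<epsilon> < R 1 / \<epsilon>"
      using part3[of w] unfolding g_def by simp
  qed
qed

end
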